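(* Let $F$ be a countably infinite graph. Then every graph $H$ on vertex set $\mathbb{N}$ having infinitely many vertices of cofinite degree contains a subgraph isomorphic to $F$ whose vertex set is cofinite in $\mathbb{N}$ if and only if $F$ is strongly contracting.
   Context: A vertex $v$ of $H$ has cofinite degree if it is adjacent to all but finitely many vertices of $H$. $F$ is strongly contracting if there is $k\in\mathbb{N}$ such that for every $\ell\in\mathbb{N}$ there is an independent set $A$ in $F$ with $|A|\ge\ell$ and $|N(A)|\le k$, where $N(A)=\bigcup_{v\in A}N(v)$. *)

theory Defs
  imports Main "HOL-Library.Countable_Set"
begin

definition graph :: "'a set \<Rightarrow> ('a \<Rightarrow> 'a \<Rightarrow> bool) \<Rightarrow> bool" where
  "graph V E \<longleftrightarrow> (\<forall>u v. E u v \<longrightarrow> u \<in> V \<and> v \<in> V \<and> u \<noteq> v \<and> E v u)"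

definition nbhd :: "('a \<Rightarrow> 'a \<Rightarrow> bool) \<Rightarrow> 'a set \<Rightarrow> 'a set" where
  "nbhd E A = (\<Union>v\<in>A. {u. E v u})"

definition independent :: "('a \<Rightarrow> 'a \<Rightarrow> bool) \<Rightarrow> 'a set \<Rightarrow> bool" where
  "independent E A \<longleftrightarrow> (\<forall>u\<in>A. \<forall>v\<in>A. \<not> E u v)"

definition strongly_contracting :: "'a set \<Rightarrow> ('a \<Rightarrow> 'a \<Rightarrow> bool) \<Rightarrow> bool" where
  "strongly_contracting V E \<longleftrightarrow>
     (\<exists>k::nat. \<forall>l::nat. \<exists>A. A \<subseteq> V \<and> independent E A \<and> (infinite A \<or> l \<le> card A)
        \<and> finite (nbhd E A) \<and> card (nbhd E A) \<le> k)"

definition cofinite_degree :: "'a set \<Rightarrow> ('a \<Rightarrow> 'a \<Rightarrow> bool) \<Rightarrow> 'a \<Rightarrow> bool" where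
  "cofinite_degree V E v \<longleftrightarrow> finite {u \<in> V. \<not> E v u}"

text \<open>H (on vertex set UNIV :: nat set) contains a subgraph isomorphic to (V,E)
whose vertex set is cofinite: an injective map f on V whose image is cofinite and
which sends edges to edges (the image subgraph has vertex set f ` V and edge set the
image of E).\<close>
definition has_cofinite_copy :: "'a set \<Rightarrow> ('a \<Rightarrow> 'a \<Rightarrow> bool) \<Rightarrow> (nat \<Rightarrow> nat \<Rightarrow> bool) \<Rightarrow> bool" where
  "has_cofinite_copy V E H \<longleftrightarrow>
     (\<exists>f :: 'a \<Rightarrow> nat. inj_on f V \<and> finite (UNIV - f ` V) \<and>
        (\<forall>u\<in>V. \<forall>v\<in>V. E u v \<longrightarrow> H (f u) (f v)))"

end

theory Submission
  imports Defs
begin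


primrec Gf :: "(nat \<Rightarrow> nat) \<Rightarrow> nat \<Rightarrow> nat" where
  "Gf lf 0 = 0"
| "Gf lf (Suc n) = Gf lf n + lf n + 1"

lemma Gf_smono: "strict_mono (Gf lf)"
  by (simp add: strict_mono_Suc_iff)

lemma Gf_ge: "n \<le> Gf lf n"
  using strict_mono_imp_increasing[OF Gf_smono] .

definition Hbad :: "(nat \<Rightarrow> nat) \<Rightarrow> nat \<Rightarrow> nat \<Rightarrow> bool" where
  "Hbad lf u v \<longleftrightarrow> (even u \<and> even v \<and> u \<noteq> v)
     \<or> (even u \<and> odd v \<and> Gf lf (Suc (u div 2)) \<le> v div 2)
     \<or> (odd u \<and> even v \<and> Gf lf (Suc (v div 2)) \<le> u div 2)"

lemma Hbad_graph: "graph UNIV (Hbad lf)"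
  unfolding graph_def Hbad_def by auto

lemma Hbad_cof: "cofinite_degree UNIV (Hbad lf) (2*i)"
proof -
  have "{u \<in> UNIV. \<not> Hbad lf (2*i) u} \<subseteq> {..< 2 * Gf lf (Suc i) + 2*i + 1}"
    unfolding Hbad_def by auto
  then show ?thesis unfolding cofinite_degree_def using finite_subset by blast
qed

lemma Hbad_inf: "infinite {v. cofinite_degree UNIV (Hbad lf) v}"
proof -
  have "range (\<lambda>i::nat. 2*i) \<subseteq> {v. cofinite_degree UNIV (Hbad lf) v}"
    using Hbad_cof by auto
  moreover have "infinite (range (\<lambda>i::nat. 2*i))"
    by (rule range_inj_infinite) (auto simp: inj_def)
  ultimately show ?thesis using finite_subset by blast
qed

lemma not_allE_helper: "\<not> (\<forall>x. P x) \<Longrightarrow> (\<And>x. \<not> P x \<Longrightarrow> Q) \<Longrightarrow> Q" by blast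

lemma necessity:
  assumes gF: "graph V E"
    and ns: "\<not> strongly_contracting V E"
  shows "\<exists>H. graph UNIV H \<and> infinite {v. cofinite_degree UNIV H v} \<and> \<not> has_cofinite_copy V E H"
proof -
  have ex: "\<exists>l. \<forall>A. A \<subseteq> V \<and> independent E A \<and> (infinite A \<or> l \<le> card A)
          \<longrightarrow> \<not> (finite (nbhd E A) \<and> card (nbhd E A) \<le> k)" for k
  proof (rule ccontr)
    assume a: "\<not> (\<exists>l. \<forall>A. A \<subseteq> V \<and> independent E A \<and> (infinite A \<or> l \<le> card A)
          \<longrightarrow> \<not> (finite (nbhd E A) \<and> card (nbhd E A) \<le> k))"
    have "\<forall>l. \<exists>A. A \<subseteq> V \<and> independent E A \<and> (infinite A \<or> l \<le> card A) \<and> finite (nbhd E A) \<and> card (nbhd E A) \<le> k"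
    proof
      fix l
      from a have "\<not> (\<forall>A. A \<subseteq> V \<and> independent E A \<and> (infinite A \<or> l \<le> card A)
          \<longrightarrow> \<not> (finite (nbhd E A) \<and> card (nbhd E A) \<le> k))" by (rule contrapos_nn) (rule exI)
      then obtain A where "\<not> (A \<subseteq> V \<and> independent E A \<and> (infinite A \<or> l \<le> card A)
          \<longrightarrow> \<not> (finite (nbhd E A) \<and> card (nbhd E A) \<le> k))" by (rule not_allE_helper)
      then show "\<exists>A. A \<subseteq> V \<and> independent E A \<and> (infinite A \<or> l \<le> card A) \<and> finite (nbhd E A) \<and> card (nbhd E A) \<le> k"
        by (intro exI[of _ A]) simp
    qed
    then have "strongly_contracting V E" unfolding strongly_contracting_def by (rule exI)
    then show False using ns by contradiction
  qed
  define lf where "lf k = (SOME l. \<forall>A. A \<subseteq> V \<and> independent E A \<and> (infinite A \<or> l \<le> card A)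
          \<longrightarrow> \<not> (finite (nbhd E A) \<and> card (nbhd E A) \<le> k))" for k
  have lf0: "\<forall>A. A \<subseteq> V \<and> independent E A \<and> (infinite A \<or> lf k \<le> card A)
          \<longrightarrow> \<not> (finite (nbhd E A) \<and> card (nbhd E A) \<le> k)" for k
    unfolding lf_def by (rule someI_ex[OF ex])
  have lf: "\<not> (finite (nbhd E A) \<and> card (nbhd E A) \<le> k)"
    if "A \<subseteq> V" "independent E A" "infinite A \<or> lf k \<le> card A" for k A
    using lf0[of k] that by simp
  define G where "G = Gf lf"
  have Gsm: "strict_mono G" unfolding G_def by (rule Gf_smono)
  have "\<not> has_cofinite_copy V E (Hbad lf)"
  proof
    assume "has_cofinite_copy V E (Hbad lf)"
    then obtain f where inj: "inj_on f V" and fin: "finite (UNIV - f ` V)"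
      and ed: "\<forall>u\<in>V. \<forall>v\<in>V. E u v \<longrightarrow> Hbad lf (f u) (f v)"
      unfolding has_cofinite_copy_def by blast
    from finite_nat_bounded[OF fin] obtain M where M0: "UNIV - f ` V \<subseteq> {..<M}" ..
    have M: "x < M" if "x \<in> UNIV - f ` V" for x using M0 that by auto
    define k where "k = M"
    define B where "B = (\<lambda>x. 2*x+1) ` {G k..<G (Suc k)}"
    have "k \<le> G k" unfolding G_def by (rule Gf_ge)
    have BV: "B \<subseteq> f ` V"
    proof
      fix y assume "y \<in> B"
      then have "y \<ge> M" unfolding B_def using \<open>k \<le> G k\<close> k_def by auto
      then show "y \<in> f ` V" using M by force
    qed
    define P where "P = {v \<in> V. f v \<in> B}"
    have fP: "f ` P = B" unfolding P_def using BV by auto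
    have injP: "inj_on f P" using inj unfolding P_def by (rule inj_on_subset) auto
    have cB: "card B = lf k + 1"
      unfolding B_def G_def by (subst card_image) (auto simp: inj_on_def)
    have cP: "card P = lf k + 1" using card_image[OF injP] fP cB by simp
    have PV: "P \<subseteq> V" unfolding P_def by auto
    have indP: "independent E P"
      unfolding independent_def
    proof (intro ballI notI)
      fix u v assume u: "u \<in> P" and v: "v \<in> P" and "E u v"
      then have "Hbad lf (f u) (f v)" using ed PV by blast
      moreover have "odd (f u)" "odd (f v)" using u v unfolding P_def B_def by auto
      ultimately show False unfolding Hbad_def by auto
    qed
    define Q where "Q = {u \<in> V. f u \<in> (\<lambda>i. 2*i) ` {..<k}}"
    have injQ: "inj_on f Q" using inj unfolding Q_def by (rule inj_on_subset) auto
    have fQ: "f ` Q \<subseteq> (\<lambda>i. 2*i) ` {..<k}" unfolding Q_def by auto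
    have finQ: "finite Q" using finite_imageD[OF finite_subset[OF fQ] injQ] by blast
    have cQ: "card Q \<le> k"
    proof -
      have "card Q = card (f ` Q)" using card_image[OF injQ] by simp
      also have "\<dots> \<le> card ((\<lambda>i::nat. 2*i) ` {..<k})" by (rule card_mono) (auto simp: fQ)
      also have "\<dots> \<le> k" using card_image_le[of "{..<k}" "\<lambda>i::nat. 2*i"] by simp
      finally show ?thesis .
    qed
    have NQ: "nbhd E P \<subseteq> Q"
    proof
      fix u assume "u \<in> nbhd E P"
      then obtain a where a: "a \<in> P" and eau: "E a u" unfolding nbhd_def by auto
      have uV: "u \<in> V" using gF eau unfolding graph_def by blast
      have H: "Hbad lf (f a) (f u)" using ed a uV PV eau by blast
      from a obtain x where x: "f a = 2*x+1" "G k \<le> x" "x < G (Suc k)"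
        unfolding P_def B_def by auto
      have "even (f u) \<and> G (Suc (f u div 2)) \<le> x" using H x unfolding Hbad_def G_def by auto
      then have ev: "even (f u)" and lt: "G (Suc (f u div 2)) < G (Suc k)" using x by auto
      have "Suc (f u div 2) < Suc k" using lt Gsm strict_mono_less by blast
      then have "f u \<in> (\<lambda>i. 2*i) ` {..<k}" using ev by (auto intro!: image_eqI[of _ _ "f u div 2"])
      then show "u \<in> Q" unfolding Q_def using uV by auto
    qed
    have "finite (nbhd E P)" using finite_subset[OF NQ finQ] .
    moreover have "card (nbhd E P) \<le> k" using card_mono[OF finQ NQ] cQ by simp
    ultimately have "finite (nbhd E P) \<and> card (nbhd E P) \<le> k" by simp
    moreover have "lf k \<le> card P" using cP by simp
    then have "infinite P \<or> lf k \<le> card P" by simp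
    from lf[OF PV indP this] show False using \<open>finite (nbhd E P) \<and> card (nbhd E P) \<le> k\<close> by simp
  qed
  then show ?thesis using Hbad_graph Hbad_inf by blast
qed



primrec cl :: "(nat \<Rightarrow> nat \<Rightarrow> bool) \<Rightarrow> nat \<Rightarrow> nat list" where
  "cl H 0 = []"
| "cl H (Suc n) = (SOME x. cofinite_degree UNIV H x \<and> x \<notin> set (cl H n) \<and> (\<forall>y\<in>set (cl H n). H y x)) # cl H n"

lemma clique_seq:
  assumes g: "graph UNIV H" and inf: "infinite {v. cofinite_degree UNIV H v}"
  shows "\<exists>c::nat\<Rightarrow>nat. inj c \<and> (\<forall>i. cofinite_degree UNIV H (c i)) \<and> (\<forall>i j. i \<noteq> j \<longrightarrow> H (c i) (c j))"
proof -
  define C where "C = {v. cofinite_degree UNIV H v}"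
  have sym: "\<And>x y. H x y \<Longrightarrow> H y x" using g unfolding graph_def by blast
  have key: "\<exists>x. cofinite_degree UNIV H x \<and> x \<notin> S \<and> (\<forall>y\<in>S. H y x)" if "finite S" "S \<subseteq> C" for S
  proof -
    have "finite (\<Union>y\<in>S. {x. \<not> H y x})"
      using that unfolding C_def cofinite_degree_def by auto
    then have "infinite (C - S - (\<Union>y\<in>S. {x. \<not> H y x}))"
      using inf that(1) unfolding C_def by (metis Diff_infinite_finite)
    then obtain x where "x \<in> C - S - (\<Union>y\<in>S. {x. \<not> H y x})"
      by (metis finite.emptyI ex_in_conv)
    then show ?thesis unfolding C_def by auto
  qed
  have inv: "set (cl H n) \<subseteq> C" for n
  proof (induction n)
    case 0 then show ?case by simp
  next
    case (Suc n)
    then show ?case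
      using someI_ex[OF key[OF finite_set Suc]] unfolding C_def by auto
  qed
  define c where "c i = hd (cl H (Suc i))" for i
  have cspec: "cofinite_degree UNIV H (c i) \<and> c i \<notin> set (cl H i) \<and> (\<forall>y\<in>set (cl H i). H y (c i))" for i
    unfolding c_def using someI_ex[OF key[OF finite_set inv]] by simp
  have cset: "set (cl H n) = c ` {..<n}" for n
  proof (induction n)
    case 0 then show ?case by simp
  next
    case (Suc n)
    have "set (cl H (Suc n)) = insert (c n) (set (cl H n))" unfolding c_def by simp
    then show ?case using Suc by (simp add: lessThan_Suc)
  qed
  have adj: "H (c i) (c j)" if "i < j" for i j
    using cspec[of j] cset[of j] that by auto
  have neq: "c i \<noteq> c j" if "i < j" for i j
  proof
    assume "c i = c j"
    then have "c j \<in> c ` {..<j}" using that by (metis imageI lessThan_iff)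
    then show False using cspec[of j] cset[of j] by simp
  qed
  have "inj c"
    by (metis inj_def neq linorder_neqE_nat)
  moreover have "\<forall>i j. i \<noteq> j \<longrightarrow> H (c i) (c j)"
    by (metis adj sym linorder_neqE_nat)
  ultimately show ?thesis using cspec by blast
qed



locale suff =
  fixes V :: "'a set" and E :: "'a \<Rightarrow> 'a \<Rightarrow> bool" and H :: "nat \<Rightarrow> nat \<Rightarrow> bool"
    and k :: nat and c :: "nat \<Rightarrow> nat"
  assumes gF: "graph V E" and cV: "countable V" and iV: "infinite V"
    and gH: "graph UNIV H"
    and sc: "\<forall>l. \<exists>A. A \<subseteq> V \<and> independent E A \<and> (infinite A \<or> l \<le> card A) \<and> finite (nbhd E A) \<and> card (nbhd E A) \<le> k"
    and cinj: "inj c" and ccof: "\<forall>i. cofinite_degree UNIV H (c i)"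
    and cadj: "\<forall>i j. i \<noteq> j \<longrightarrow> H (c i) (c j)"
begin

abbreviation "R \<equiv> Suc k"

lemma Hsym: "H x y \<Longrightarrow> H y x" using gH unfolding graph_def by blast
lemma Esym: "E x y \<Longrightarrow> E y x" using gF unfolding graph_def by blast
lemma Eirr: "E x y \<Longrightarrow> x \<noteq> y" using gF unfolding graph_def by blast
lemma EV: "E x y \<Longrightarrow> y \<in> V" using gF unfolding graph_def by blast

lemma nonnbr_fin: "finite {w. \<not> H w (c i)}"
proof -
  have "{w. \<not> H w (c i)} \<subseteq> {u \<in> UNIV. \<not> H (c i) u}" using Hsym by blast
  then show ?thesis using ccof finite_subset unfolding cofinite_degree_def by blast
qed

definition st :: "nat \<Rightarrow> nat" where
  "st w = (if \<forall>i. H w (c i) then w else (LEAST i. \<not> H w (c i)) div R - 1)"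

definition L :: "nat \<Rightarrow> nat set" where
  "L m = {w. w \<notin> range c \<and> (\<forall>i<R. H w (c i)) \<and> st w = m}"

lemma st_adj:
  assumes "\<forall>i<R. H w (c i)" and "i < Suc (st w) * R"
  shows "H w (c i)"
proof (cases "\<forall>i. H w (c i)")
  case True then show ?thesis by blast
next
  case False
  define e where "e = (LEAST i. \<not> H w (c i))"
  have ne: "\<not> H w (c e)" unfolding e_def using False by (metis LeastI)
  have "R \<le> e" using assms(1) ne by (metis not_less)
  then have "1 \<le> e div R" by (simp add: div_le_mono[of R e R, simplified])
  have "st w = e div R - 1" unfolding st_def e_def by (rule if_not_P[OF False])
  then have "Suc (st w) = e div R" using \<open>1 \<le> e div R\<close> by simp
  then have "Suc (st w) * R \<le> e" by (metis div_times_less_eq_dividend)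
  then have "i < e" using assms(2) by simp
  then show ?thesis unfolding e_def using not_less_Least by blast
qed

lemma L_adj: "w \<in> L m \<Longrightarrow> i < Suc m * R \<Longrightarrow> H w (c i)"
  unfolding L_def using st_adj by blast

lemma L_fin: "finite (L m)"
proof -
  have "L m \<subseteq> {m} \<union> (\<Union>i<Suc (Suc m) * R. {w. \<not> H w (c i)})"
  proof
    fix w assume w: "w \<in> L m"
    show "w \<in> {m} \<union> (\<Union>i<Suc (Suc m) * R. {w. \<not> H w (c i)})"
    proof (cases "\<forall>i. H w (c i)")
      case True then show ?thesis using w unfolding L_def st_def by auto
    next
      case False
      define e where "e = (LEAST i. \<not> H w (c i))"
      have ne: "\<not> H w (c e)" unfolding e_def using False by (metis LeastI)
      have "e div R - 1 = m" using w False unfolding L_def st_def e_def by auto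
      then have "e div R < Suc (Suc m)" by linarith
      then have "e < Suc (Suc m) * R" by (simp add: div_less_iff_less_mult)
      then show ?thesis using ne by auto
    qed
  qed
  moreover have "finite ({m} \<union> (\<Union>i<Suc (Suc m) * R. {w. \<not> H w (c i)}))"
    using nonnbr_fin by auto
  ultimately show ?thesis using finite_subset by blast
qed

lemma L_disj: "m \<noteq> m' \<Longrightarrow> L m \<inter> L m' = {}"
  unfolding L_def by auto

lemma L_c: "L m \<inter> range c = {}"
  unfolding L_def by auto

lemma c_disj: "a < n \<Longrightarrow> n \<le> b \<Longrightarrow> c a \<noteq> c b"
  using injD[OF cinj] by fastforce

lemma Lc: "x \<in> L m \<Longrightarrow> x \<notin> range c"
  unfolding L_def by simp

lemma Ld: "x \<in> L m \<Longrightarrow> x \<in> L m' \<Longrightarrow> m = m'"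
  unfolding L_def by simp

definition Inv :: "nat \<Rightarrow> 'a set \<Rightarrow> ('a \<Rightarrow> nat) \<Rightarrow> 'a set \<Rightarrow> bool" where
 "Inv m D g Hb \<longleftrightarrow> finite D \<and> D \<subseteq> V \<and> Hb \<subseteq> D \<and> inj_on g D
   \<and> (\<forall>u\<in>D. \<forall>v\<in>D. E u v \<longrightarrow> H (g u) (g v))
   \<and> (\<forall>v\<in>D-Hb. \<forall>u. E v u \<longrightarrow> u \<in> Hb)
   \<and> (\<forall>v\<in>Hb. g v \<in> c ` {..<m*R})
   \<and> (\<forall>v\<in>D. g v \<in> c ` {..<m*R} \<union> (\<Union>m'<m. L m'))
   \<and> (\<forall>j<m. from_nat_into V j \<in> D)
   \<and> c ` {..<m*R} \<union> (\<Union>m'<m. L m') \<subseteq> g ` D"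

lemma Inv_fD: "Inv m D g Hb \<Longrightarrow> finite D" unfolding Inv_def by (elim conjE) assumption
lemma Inv_DV: "Inv m D g Hb \<Longrightarrow> D \<subseteq> V" unfolding Inv_def by (elim conjE) assumption
lemma Inv_HbD: "Inv m D g Hb \<Longrightarrow> Hb \<subseteq> D" unfolding Inv_def by (elim conjE) assumption
lemma Inv_ig: "Inv m D g Hb \<Longrightarrow> inj_on g D" unfolding Inv_def by (elim conjE) assumption
lemma Inv_edg: "Inv m D g Hb \<Longrightarrow> \<forall>u\<in>D. \<forall>v\<in>D. E u v \<longrightarrow> H (g u) (g v)" unfolding Inv_def by (elim conjE) assumption
lemma Inv_lf: "Inv m D g Hb \<Longrightarrow> \<forall>v\<in>D-Hb. \<forall>u. E v u \<longrightarrow> u \<in> Hb" unfolding Inv_def by (elim conjE) assumption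
lemma Inv_hb: "Inv m D g Hb \<Longrightarrow> \<forall>v\<in>Hb. g v \<in> c ` {..<m*R}" unfolding Inv_def by (elim conjE) assumption
lemma Inv_rg: "Inv m D g Hb \<Longrightarrow> \<forall>v\<in>D. g v \<in> c ` {..<m*R} \<union> (\<Union>m'<m. L m')" unfolding Inv_def by (elim conjE) assumption
lemma Inv_nu: "Inv m D g Hb \<Longrightarrow> \<forall>j<m. from_nat_into V j \<in> D" unfolding Inv_def by (elim conjE) assumption
lemma Inv_cov: "Inv m D g Hb \<Longrightarrow> c ` {..<m*R} \<union> (\<Union>m'<m. L m') \<subseteq> g ` D" unfolding Inv_def by (elim conjE) assumption

lemma adjP:
  assumes "x \<in> c ` {..<Suc m*R}" "y \<in> c ` {..<Suc m*R} \<union> L m" "x \<noteq> y"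
  shows "H x y"
proof -
  obtain i where i: "i < Suc m*R" "x = c i" using assms(1) by auto
  show ?thesis
  proof (cases "y \<in> L m")
    case True
    then show ?thesis using L_adj[OF True i(1)] Hsym i(2) by simp
  next
    case False
    then obtain j where j: "y = c j" using assms(2) by auto
    then have "i \<noteq> j" using i(2) assms(3) by auto
    then show ?thesis using cadj i(2) j by simp
  qed
qed

lemma step:
  assumes I: "Inv m D g Hb"
  shows "\<exists>D' g' Hb'. Inv (Suc m) D' g' Hb' \<and> D \<subseteq> D' \<and> (\<forall>v\<in>D. g' v = g v)"
proof -
  have fD: "finite D" using I unfolding Inv_def by (elim conjE) assumption
  have DV: "D \<subseteq> V" using I unfolding Inv_def by (elim conjE) assumption
  have HbD: "Hb \<subseteq> D" using I unfolding Inv_def by (elim conjE) assumption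
  have ig: "inj_on g D" using I unfolding Inv_def by (elim conjE) assumption
  have edg: "\<forall>u\<in>D. \<forall>v\<in>D. E u v \<longrightarrow> H (g u) (g v)" using I unfolding Inv_def by (elim conjE) assumption
  have lf: "\<forall>v\<in>D-Hb. \<forall>u. E v u \<longrightarrow> u \<in> Hb" using I unfolding Inv_def by (elim conjE) assumption
  have hb: "\<forall>v\<in>Hb. g v \<in> c ` {..<m*R}" using I unfolding Inv_def by (elim conjE) assumption
  have rg: "\<forall>v\<in>D. g v \<in> c ` {..<m*R} \<union> (\<Union>m'<m. L m')" using I unfolding Inv_def by (elim conjE) assumption
  have nu: "\<forall>j<m. from_nat_into V j \<in> D" using I unfolding Inv_def by (elim conjE) assumption
  have cov: "c ` {..<m*R} \<union> (\<Union>m'<m. L m') \<subseteq> g ` D" using I unfolding Inv_def by (elim conjE) assumption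
  define x0 where "x0 = from_nat_into V m"
  have "V \<noteq> {}" using iV by auto
  then have x0V: "x0 \<in> V" unfolding x0_def by (rule from_nat_into)
  define D0 where "D0 = insert x0 D"
  have fD0: "finite D0" unfolding D0_def using fD by simp
  define need where "need = R + card (L m)"
  obtain A0 where A0V: "A0 \<subseteq> V" and iA0: "independent E A0"
    and szA0: "infinite A0 \<or> need + card D0 \<le> card A0"
    and fN0: "finite (nbhd E A0)" and cN0: "card (nbhd E A0) \<le> k" using sc by blast
  define A' where "A' = A0 - D0"
  have A'V: "A' \<subseteq> V" unfolding A'_def using A0V by auto
  have iA': "independent E A'" using iA0 unfolding A'_def independent_def by auto
  have A'D0: "A' \<inter> D0 = {}" unfolding A'_def by auto
  have szA': "infinite A' \<or> need \<le> card A'"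
  proof (cases "infinite A0")
    case True then show ?thesis unfolding A'_def using fD0 by auto
  next
    case False
    then have "need + card D0 \<le> card A0" using szA0 by blast
    moreover have "card A0 - card D0 \<le> card A'" unfolding A'_def by (rule diff_card_le_card_Diff[OF fD0])
    ultimately show ?thesis by linarith
  qed
  have NA'sub: "nbhd E A' \<subseteq> nbhd E A0" unfolding nbhd_def A'_def by auto
  have fNA': "finite (nbhd E A')" using fN0 NA'sub finite_subset by blast
  have cNA': "card (nbhd E A') \<le> k" using card_mono[OF fN0 NA'sub] cN0 by simp
  have NA'V: "nbhd E A' \<subseteq> V" unfolding nbhd_def using EV by auto
  define NH where "NH = insert x0 (nbhd E A') - D"
  have fNH: "finite NH" unfolding NH_def using fNA' by simp
  have cNH: "card NH \<le> R"
  proof -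
    have "card NH \<le> card (insert x0 (nbhd E A'))" unfolding NH_def
      by (rule card_mono) (use fNA' in auto)
    also have "\<dots> \<le> Suc (card (nbhd E A'))" by (simp add: card_insert_if fNA')
    finally show ?thesis using cNA' by simp
  qed
  have NHV: "NH \<subseteq> V" unfolding NH_def using NA'V x0V by auto
  have NHD: "NH \<inter> D = {}" unfolding NH_def by auto
  obtain idx where bidx: "bij_betw idx NH {0..<card NH}" using ex_bij_betw_finite_nat[OF fNH] by blast
  define h where "h v = c (m*R + idx v)" for v
  have hrange: "h v \<in> c ` {m*R..<Suc m*R}" if "v \<in> NH" for v
  proof -
    have "idx v < card NH" using bidx that unfolding bij_betw_def by auto
    then have "m*R + idx v \<in> {m*R..<Suc m*R}" using cNH by simp
    then show ?thesis unfolding h_def by (rule imageI)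
  qed
  have hinj: "inj_on h NH"
  proof (rule inj_onI)
    fix x y assume xy: "x \<in> NH" "y \<in> NH" "h x = h y"
    then have "c (m*R + idx x) = c (m*R + idx y)" unfolding h_def by simp
    then have "m*R + idx x = m*R + idx y" using injD[OF cinj] by blast
    then have "idx x = idx y" by simp
    then show "x = y" using xy(1,2) bidx unfolding bij_betw_def inj_on_def by blast
  qed
  define Tgt where "Tgt = (c ` {m*R..<Suc m*R} - h ` NH) \<union> L m"
  have fTgt: "finite Tgt" unfolding Tgt_def using L_fin[of m] by simp
  have cTgt: "card Tgt \<le> need"
  proof -
    have "card Tgt \<le> card (c ` {m*R..<Suc m*R} - h ` NH) + card (L m)"
      unfolding Tgt_def by (rule card_Un_le)
    also have "card (c ` {m*R..<Suc m*R} - h ` NH) \<le> card (c ` {m*R..<Suc m*R})"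
      by (rule card_mono) (simp, blast)
    also have "\<dots> \<le> card {m*R..<Suc m*R}" by (rule card_image_le) simp
    finally show ?thesis unfolding need_def by simp
  qed
  obtain Am where AmA: "Am \<subseteq> A'" and fAm: "finite Am" and cAm: "card Am = card Tgt"
  proof (cases "infinite A'")
    case True
    obtain B where "finite B" "card B = card Tgt" "B \<subseteq> A'"
      using infinite_arbitrarily_large[OF True] by blast
    then show ?thesis using that by blast
  next
    case False
    then have "card Tgt \<le> card A'" using szA' cTgt by linarith
    then obtain B where "B \<subseteq> A'" "card B = card Tgt" "finite B"
      by (rule obtain_subset_with_card_n)
    then show ?thesis using that by blast
  qed
  obtain phi where bphi: "bij_betw phi Am Tgt" using finite_same_card_bij[OF fAm fTgt cAm] by blast
  have AmD: "Am \<inter> D = {}" using AmA A'D0 unfolding D0_def by auto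
  have AmNH: "Am \<inter> NH = {}"
  proof -
    have "v \<notin> NH" if v: "v \<in> Am" for v
    proof
      assume "v \<in> NH"
      then have "v = x0 \<or> v \<in> nbhd E A'" unfolding NH_def by auto
      moreover have "v \<noteq> x0" using v AmA A'D0 unfolding D0_def by auto
      moreover have "v \<notin> nbhd E A'"
        using v AmA iA' unfolding nbhd_def independent_def by auto
      ultimately show False by blast
    qed
    then show ?thesis by blast
  qed
  have phirange: "phi v \<in> Tgt" if "v \<in> Am" for v using bphi that unfolding bij_betw_def by auto
  define D' where "D' = D \<union> NH \<union> Am"
  define Hb' where "Hb' = Hb \<union> NH"
  define g' where "g' v = (if v \<in> D then g v else if v \<in> NH then h v else phi v)" for v
  have g'D: "g' v = g v" if "v \<in> D" for v using that unfolding g'_def by simp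
  have g'NH: "g' v = h v" if "v \<in> NH" for v using that NHD unfolding g'_def by auto
  have g'Am: "g' v = phi v" if "v \<in> Am" for v using that AmD AmNH unfolding g'_def by auto
  define Old where "Old = c ` {..<m*R} \<union> (\<Union>m'<m. L m')"
  have d1: "x \<notin> c ` {m*R..<Suc m*R}" if x: "x \<in> Old" for x
  proof
    assume "x \<in> c ` {m*R..<Suc m*R}"
    then obtain b where b: "x = c b" "m*R \<le> b" by auto
    from x have "x \<in> c ` {..<m*R} \<or> (\<exists>m'. x \<in> L m')" unfolding Old_def by blast
    then show False
    proof
      assume "x \<in> c ` {..<m*R}"
      then obtain a where a: "x = c a" "a < m*R" by auto
      then show False using b c_disj by metis
    next
      assume "\<exists>m'. x \<in> L m'"
      then show False using b Lc by blast
    qed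
  qed
  have dL: "x \<notin> L m" if x: "x \<in> Old" for x
  proof
    assume xL: "x \<in> L m"
    from x have "x \<in> c ` {..<m*R} \<or> (\<exists>m'<m. x \<in> L m')" unfolding Old_def by blast
    then show False
    proof
      assume "x \<in> c ` {..<m*R}"
      then show False using xL Lc by blast
    next
      assume "\<exists>m'<m. x \<in> L m'"
      then obtain m' where m': "m' < m" "x \<in> L m'" by blast
      then have "m = m'" using xL Ld by blast
      then show False using m' by simp
    qed
  qed
  have d2: "x \<notin> Tgt" if x: "x \<in> Old" for x
  proof
    assume "x \<in> Tgt"
    then have "x \<in> c ` {m*R..<Suc m*R} \<or> x \<in> L m" unfolding Tgt_def by blast
    then show False using d1[OF x] dL[OF x] by blast
  qed
  have d3: "x \<notin> Tgt" if x: "x \<in> h ` NH" for x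
  proof
    assume "x \<in> Tgt"
    then have "x \<notin> h ` NH \<and> x \<in> c ` {m*R..<Suc m*R} \<or> x \<in> L m" unfolding Tgt_def by blast
    moreover have "x \<in> range c" using x unfolding h_def by blast
    ultimately show False using x Lc by blast
  qed
  have sub1: "c ` {..<m*R} \<subseteq> c ` {..<Suc m*R}" by (rule image_mono) auto
  have sub2: "c ` {m*R..<Suc m*R} \<subseteq> c ` {..<Suc m*R}" by (rule image_mono) auto
  have subT: "Tgt \<subseteq> c ` {..<Suc m*R} \<union> L m"
  proof
    fix x assume "x \<in> Tgt"
    then have "x \<in> c ` {m*R..<Suc m*R} \<or> x \<in> L m" unfolding Tgt_def by blast
    then show "x \<in> c ` {..<Suc m*R} \<union> L m" using sub2 by blast
  qed
  have hubrng: "g' v \<in> c ` {..<Suc m*R}" if "v \<in> Hb'" for v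
  proof -
    { assume v: "v \<in> Hb"
      then have "g' v = g v" using HbD g'D by blast
      moreover have "g v \<in> c ` {..<m*R}" using hb v by blast
      ultimately have ?thesis using sub1 by auto }
    moreover { assume "v \<in> NH" then have ?thesis using hrange g'NH sub2 by auto }
    ultimately show ?thesis using that unfolding Hb'_def by blast
  qed
  have rng: "g' v \<in> c ` {..<Suc m*R} \<union> L m" if "v \<in> Hb \<union> NH \<union> Am" for v
  proof -
    { assume "v \<in> Hb \<union> NH" then have ?thesis using hubrng unfolding Hb'_def by blast }
    moreover { assume "v \<in> Am" then have ?thesis using phirange g'Am subT by auto }
    ultimately show ?thesis using that by blast
  qed
  have imD: "g' w \<in> Old" if "w \<in> D" for w
    using that rg g'D unfolding Old_def by simp
  have imNH: "g' w \<in> h ` NH" "g' w \<in> c ` {m*R..<Suc m*R}" if "w \<in> NH" for w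
    using that g'NH hrange by auto
  have imAm: "g' w \<in> Tgt" if "w \<in> Am" for w
    using that g'Am phirange by simp
  have inj': "inj_on g' D'"
  proof (rule inj_onI)
    fix u v assume u: "u \<in> D'" and v: "v \<in> D'" and eq: "g' u = g' v"
    have u3: "u \<in> D \<or> u \<in> NH \<or> u \<in> Am" using u unfolding D'_def by blast
    have v3: "v \<in> D \<or> v \<in> NH \<or> v \<in> Am" using v unfolding D'_def by blast
    show "u = v"
    proof -
      { assume "u \<in> D" "v \<in> D" then have ?thesis using ig eq g'D inj_onD by metis }
      moreover { assume "u \<in> NH" "v \<in> NH" then have ?thesis using hinj eq g'NH inj_onD by metis }
      moreover { assume "u \<in> Am" "v \<in> Am" then have ?thesis using bphi eq g'Am unfolding bij_betw_def by (metis inj_onD) }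
      moreover { assume "u \<in> D" "v \<in> NH" then have False using imD imNH d1 eq by metis }
      moreover { assume "u \<in> NH" "v \<in> D" then have False using imD imNH d1 eq by metis }
      moreover { assume "u \<in> D" "v \<in> Am" then have False using imD imAm d2 eq by metis }
      moreover { assume "u \<in> Am" "v \<in> D" then have False using imD imAm d2 eq by metis }
      moreover { assume "u \<in> NH" "v \<in> Am" then have False using imNH imAm d3 eq by metis }
      moreover { assume "u \<in> Am" "v \<in> NH" then have False using imNH imAm d3 eq by metis }
      ultimately show ?thesis using u3 v3 by blast
    qed
  qed
  have edg': "\<forall>u\<in>D'. \<forall>v\<in>D'. E u v \<longrightarrow> H (g' u) (g' v)"
  proof (intro ballI impI)
    fix u v assume u: "u \<in> D'" and v: "v \<in> D'" and e: "E u v"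
    show "H (g' u) (g' v)"
    proof (cases "u \<in> D - Hb \<or> v \<in> D - Hb")
      case True
      then have "u \<in> D \<and> v \<in> D" using lf e Esym HbD by blast
      then show ?thesis using edg e g'D by simp
    next
      case False
      then have u2: "u \<in> Hb \<union> NH \<union> Am" and v2: "v \<in> Hb \<union> NH \<union> Am"
        using u v unfolding D'_def by auto
      have neq: "g' u \<noteq> g' v" using inj' u v Eirr[OF e] inj_onD by metis
      show ?thesis
      proof (cases "u \<in> Am \<and> v \<in> Am")
        case True then show ?thesis using e iA' AmA unfolding independent_def by auto
      next
        case False
        then have "u \<in> Hb' \<or> v \<in> Hb'" using u2 v2 unfolding Hb'_def by auto
        then show ?thesis
        proof
          assume "u \<in> Hb'"
          then show ?thesis using adjP[OF hubrng rng[OF v2] neq] by blast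
        next
          assume "v \<in> Hb'"
          then have "H (g' v) (g' u)" using adjP[OF hubrng rng[OF u2]] neq by metis
          then show ?thesis by (rule Hsym)
        qed
      qed
    qed
  qed
  have lf': "\<forall>v\<in>D'-Hb'. \<forall>u. E v u \<longrightarrow> u \<in> Hb'"
  proof (intro ballI allI impI)
    fix v u assume v: "v \<in> D' - Hb'" and e: "E v u"
    then have "v \<in> D - Hb \<or> v \<in> Am" unfolding D'_def Hb'_def by auto
    then show "u \<in> Hb'"
    proof
      assume "v \<in> D - Hb" then show ?thesis using lf e unfolding Hb'_def by auto
    next
      assume vA: "v \<in> Am"
      then have uN: "u \<in> nbhd E A'" using AmA e unfolding nbhd_def by auto
      show ?thesis
      proof (cases "u \<in> D")
        case True
        have "u \<in> Hb"
        proof (rule ccontr)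
          assume "u \<notin> Hb"
          then have "v \<in> Hb" using lf True Esym[OF e] by blast
          then show False using vA AmD HbD by auto
        qed
        then show ?thesis unfolding Hb'_def by simp
      next
        case False then show ?thesis using uN unfolding Hb'_def NH_def by auto
      qed
    qed
  qed
  have nu': "\<forall>j<Suc m. from_nat_into V j \<in> D'"
  proof (intro allI impI)
    fix j assume "j < Suc m"
    then have "j < m \<or> j = m" by auto
    then show "from_nat_into V j \<in> D'"
    proof
      assume "j < m" then show ?thesis using nu unfolding D'_def by auto
    next
      assume "j = m" then show ?thesis unfolding D'_def NH_def x0_def by auto
    qed
  qed
  have cov': "c ` {..<Suc m*R} \<union> (\<Union>m'<Suc m. L m') \<subseteq> g' ` D'"
  proof
    fix y assume y: "y \<in> c ` {..<Suc m*R} \<union> (\<Union>m'<Suc m. L m')"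
    show "y \<in> g' ` D'"
    proof (cases "y \<in> Old")
      case True
      then obtain v where "v \<in> D" "y = g v" using cov unfolding Old_def by auto
      then show ?thesis using g'D unfolding D'_def by force
    next
      case False
      have "y \<in> c ` {m*R..<Suc m*R} \<or> y \<in> L m"
      proof (cases "y \<in> c ` {..<Suc m*R}")
        case True
        then obtain x where x: "y = c x" "x < Suc m*R" by auto
        have "\<not> x < m*R" using False x unfolding Old_def by auto
        then show ?thesis using x by auto
      next
        case nc: False
        then obtain m' where m': "m' < Suc m" "y \<in> L m'" using y by auto
        have "\<not> m' < m" using False m' unfolding Old_def by auto
        then show ?thesis using m' by (auto simp: less_Suc_eq)
      qed
      then have "y \<in> h ` NH \<or> y \<in> Tgt" unfolding Tgt_def by auto
      then show ?thesis
      proof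
        assume "y \<in> h ` NH"
        then obtain v where "v \<in> NH" "y = h v" by auto
        then show ?thesis using g'NH unfolding D'_def by force
      next
        assume "y \<in> Tgt"
        then obtain v where "v \<in> Am" "y = phi v" using bphi unfolding bij_betw_def by auto
        then show ?thesis using g'Am unfolding D'_def by force
      qed
    qed
  qed
  have rg': "\<forall>v\<in>D'. g' v \<in> c ` {..<Suc m*R} \<union> (\<Union>m'<Suc m. L m')"
  proof
    fix v assume v: "v \<in> D'"
    show "g' v \<in> c ` {..<Suc m*R} \<union> (\<Union>m'<Suc m. L m')"
    proof (cases "v \<in> D")
      case True
      then have "g' v \<in> c ` {..<m*R} \<union> (\<Union>m'<m. L m')" using rg g'D by simp
      then show ?thesis by auto
    next
      case False
      then have "v \<in> NH \<union> Am" using v unfolding D'_def by auto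
      then show ?thesis using rng by auto
    qed
  qed
  have fD': "finite D'" unfolding D'_def using fD fNH fAm by simp
  have D'V: "D' \<subseteq> V" unfolding D'_def using DV NHV AmA A'V by blast
  have Hb'D': "Hb' \<subseteq> D'" unfolding D'_def Hb'_def using HbD by blast
  have hubrng': "\<forall>v\<in>Hb'. g' v \<in> c ` {..<Suc m*R}" using hubrng by blast
  have "Inv (Suc m) D' g' Hb'"
    unfolding Inv_def
    by (intro conjI fD' D'V Hb'D' inj' edg' lf' hubrng' rg' nu' cov')
  moreover have "D \<subseteq> D'" unfolding D'_def by auto
  ultimately show ?thesis using g'D by blast
qed


primrec seq :: "nat \<Rightarrow> 'a set \<times> ('a \<Rightarrow> nat) \<times> 'a set" where
  "seq 0 = ({}, (\<lambda>_. 0), {})"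
| "seq (Suc m) = (SOME (D', g', Hb'). Inv (Suc m) D' g' Hb' \<and> fst (seq m) \<subseteq> D'
      \<and> (\<forall>v\<in>fst (seq m). g' v = fst (snd (seq m)) v))"

abbreviation "DD m \<equiv> fst (seq m)"
abbreviation "gg m \<equiv> fst (snd (seq m))"
abbreviation "HH m \<equiv> snd (snd (seq m))"

lemma seq_Suc:
  assumes "Inv m (DD m) (gg m) (HH m)"
  shows "Inv (Suc m) (DD (Suc m)) (gg (Suc m)) (HH (Suc m)) \<and> DD m \<subseteq> DD (Suc m)
     \<and> (\<forall>v\<in>DD m. gg (Suc m) v = gg m v)"
proof -
  have ex: "\<exists>x. (case x of (D', g', Hb') \<Rightarrow> Inv (Suc m) D' g' Hb' \<and> DD m \<subseteq> D'
      \<and> (\<forall>v\<in>DD m. g' v = gg m v))"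
    using step[OF assms] by auto
  have "case seq (Suc m) of (D', g', Hb') \<Rightarrow> Inv (Suc m) D' g' Hb' \<and> DD m \<subseteq> D'
      \<and> (\<forall>v\<in>DD m. g' v = gg m v)"
    using someI_ex[OF ex] by simp
  then show ?thesis by (cases "seq (Suc m)") auto
qed

lemma seq_inv: "Inv m (DD m) (gg m) (HH m)"
proof (induction m)
  case 0
  show ?case unfolding Inv_def by simp
next
  case (Suc m)
  then show ?case using seq_Suc[OF Suc] by (elim conjE)
qed

lemma seq_mono:
  assumes "m \<le> n"
  shows "DD m \<subseteq> DD n \<and> (\<forall>v\<in>DD m. gg n v = gg m v)"
  using assms
proof (induction n rule: dec_induct)
  case base then show ?case by simp
next
  case (step n)
  have "DD n \<subseteq> DD (Suc n) \<and> (\<forall>v\<in>DD n. gg (Suc n) v = gg n v)"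
    using seq_Suc[OF seq_inv] by blast
  then show ?case using step.IH by auto
qed

definition fin :: "'a \<Rightarrow> nat" where
  "fin v = gg (Suc (to_nat_on V v)) v"

lemma inD: "v \<in> V \<Longrightarrow> v \<in> DD (Suc (to_nat_on V v))"
proof -
  assume v: "v \<in> V"
  have "from_nat_into V (to_nat_on V v) \<in> DD (Suc (to_nat_on V v))"
    using Inv_nu[OF seq_inv[of "Suc (to_nat_on V v)"]] by blast
  then show ?thesis using v cV by simp
qed

lemma fin_eq:
  assumes "v \<in> V" "v \<in> DD n"
  shows "fin v = gg n v"
proof -
  define M where "M = max n (Suc (to_nat_on V v))"
  have "gg M v = gg n v" using seq_mono[of n M] assms(2) unfolding M_def by auto
  moreover have "gg M v = gg (Suc (to_nat_on V v)) v"
    using seq_mono[of "Suc (to_nat_on V v)" M] inD[OF assms(1)] unfolding M_def by auto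
  ultimately show ?thesis unfolding fin_def by simp
qed

lemma both_in:
  assumes "u \<in> V" "v \<in> V"
  obtains n where "u \<in> DD n" "v \<in> DD n"
proof -
  define M where "M = max (Suc (to_nat_on V u)) (Suc (to_nat_on V v))"
  have "u \<in> DD M" using seq_mono[of "Suc (to_nat_on V u)" M] inD[OF assms(1)] unfolding M_def by auto
  moreover have "v \<in> DD M" using seq_mono[of "Suc (to_nat_on V v)" M] inD[OF assms(2)] unfolding M_def by auto
  ultimately show ?thesis using that by blast
qed

lemma covered:
  assumes "\<forall>i<R. H y (c i)"
  shows "y \<in> fin ` V"
proof -
  obtain m where m: "y \<in> c ` {..<m*R} \<union> (\<Union>m'<m. L m')"
  proof (cases "y \<in> range c")
    case True
    then obtain i where "y = c i" by auto
    moreover have "i < Suc i * R" by simp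
    ultimately show ?thesis using that[of "Suc i"] by blast
  next
    case False
    then have "y \<in> L (st y)" using assms unfolding L_def by simp
    then show ?thesis using that[of "Suc (st y)"] by blast
  qed
  then have "y \<in> gg m ` DD m" using Inv_cov[OF seq_inv[of m]] by blast
  then obtain v where v: "v \<in> DD m" "y = gg m v" by blast
  have "v \<in> V" using v Inv_DV[OF seq_inv[of m]] by blast
  then have "fin v = y" using fin_eq[OF _ v(1)] v(2) by simp
  then show ?thesis using \<open>v \<in> V\<close> by (metis imageI)
qed

lemma suff_copy: "has_cofinite_copy V E H"
  unfolding has_cofinite_copy_def
proof (intro exI conjI)
  show "inj_on fin V"
  proof (rule inj_onI)
    fix u v assume u: "u \<in> V" and v: "v \<in> V" and eq: "fin u = fin v"
    obtain n where n: "u \<in> DD n" "v \<in> DD n" using both_in[OF u v] by blast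
    have "gg n u = gg n v" using eq fin_eq[OF u n(1)] fin_eq[OF v n(2)] by simp
    then show "u = v" using Inv_ig[OF seq_inv[of n]] n by (meson inj_onD)
  qed
  show "\<forall>u\<in>V. \<forall>v\<in>V. E u v \<longrightarrow> H (fin u) (fin v)"
  proof (intro ballI impI)
    fix u v assume u: "u \<in> V" and v: "v \<in> V" and e: "E u v"
    obtain n where n: "u \<in> DD n" "v \<in> DD n" using both_in[OF u v] by blast
    have "H (gg n u) (gg n v)" using Inv_edg[OF seq_inv[of n]] n e by blast
    then show "H (fin u) (fin v)" using fin_eq[OF u n(1)] fin_eq[OF v n(2)] by simp
  qed
  have "UNIV - fin ` V \<subseteq> (\<Union>i<R. {w. \<not> H w (c i)})" using covered by blast
  moreover have "finite (\<Union>i<R. {w. \<not> H w (c i)})" using nonnbr_fin by simp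
  ultimately show "finite (UNIV - fin ` V)" using finite_subset by blast
qed

end

theorem mainTheorem15:
  fixes V :: "'a set" and E :: "'a \<Rightarrow> 'a \<Rightarrow> bool"
  assumes "graph V E" and "countable V" and "infinite V"
  shows "(\<forall>H :: nat \<Rightarrow> nat \<Rightarrow> bool. graph UNIV H \<and> infinite {v. cofinite_degree UNIV H v}
            \<longrightarrow> has_cofinite_copy V E H)
         \<longleftrightarrow> strongly_contracting V E"
proof
  assume all: "\<forall>H :: nat \<Rightarrow> nat \<Rightarrow> bool. graph UNIV H \<and> infinite {v. cofinite_degree UNIV H v}
            \<longrightarrow> has_cofinite_copy V E H"
  show "strongly_contracting V E"
  proof (rule ccontr)
    assume "\<not> strongly_contracting V E"
    from necessity[OF assms(1) this] obtain H where
      H: "graph UNIV H \<and> infinite {v. cofinite_degree UNIV H v} \<and> \<not> has_cofinite_copy V E H"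
      by (elim exE)
    have "graph UNIV H \<and> infinite {v. cofinite_degree UNIV H v} \<longrightarrow> has_cofinite_copy V E H"
      using all by (rule spec)
    then show False using H by simp
  qed
next
  assume "strongly_contracting V E"
  then obtain k where sc: "\<forall>l. \<exists>A. A \<subseteq> V \<and> independent E A \<and> (infinite A \<or> l \<le> card A) \<and> finite (nbhd E A) \<and> card (nbhd E A) \<le> k"
    unfolding strongly_contracting_def by (rule exE)
  show "\<forall>H :: nat \<Rightarrow> nat \<Rightarrow> bool. graph UNIV H \<and> infinite {v. cofinite_degree UNIV H v}
            \<longrightarrow> has_cofinite_copy V E H"
  proof (intro allI impI)
    fix H :: "nat \<Rightarrow> nat \<Rightarrow> bool"
    assume h: "graph UNIV H \<and> infinite {v. cofinite_degree UNIV H v}"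
    from clique_seq[OF conjunct1[OF h] conjunct2[OF h]] obtain c :: "nat \<Rightarrow> nat" where
      c0: "inj c \<and> (\<forall>i. cofinite_degree UNIV H (c i)) \<and> (\<forall>i j. i \<noteq> j \<longrightarrow> H (c i) (c j))"
      ..
    then have c: "inj c" "\<forall>i. cofinite_degree UNIV H (c i)" "\<forall>i j. i \<noteq> j \<longrightarrow> H (c i) (c j)"
      by simp_all
    have hg: "graph UNIV H" using h by (rule conjunct1)
    have "suff V E H k c" unfolding suff_def
      by (intro conjI assms(1) assms(2) assms(3) hg sc c(1) c(2) c(3))
    then interpret suff V E H k c .
    show "has_cofinite_copy V E H" by (rule suff_copy)
  qed
qed


end
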